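(* Let $k\ge 2$ and let $u_1,u_2,u_3$ be arbitrary spectral parameters carried by slots $1,2,3$. Then $$\mathcal Q^{(k)}_{1(23)}=\mathcal Q^{(k)}_{12}+\mathcal R^{-1}_{12}\mathcal Q^{(k)}_{13}\mathcal R_{12}+\sum_{n=2}^{k-1}\ \sum_{\substack{\ell_1+\dots+\ell_n=k-1\\ \ell_i\ge 1}}c^{k-1}_{\ell_1,\dots,\ell_n}\Big[\Big[\cdots\Big[\Big[\mathcal R^{-1}_{12}\mathcal Q^{(\bar\ell_n)}_{13}\mathcal R_{12},\mathcal Q^{(\bar\ell_1)}_{12}\Big],\mathcal Q^{(\bar\ell_2)}_{12}\Big],\cdots\Big],\mathcal Q^{(\bar\ell_{n-1})}_{12}\Big]$$ and $$\tilde{\mathcal Q}^{(k)}_{(12)3}=\tilde{\mathcal Q}^{(k)}_{23}+\mathcal R^{-1}_{23}\tilde{\mathcal Q}^{(k)}_{13}\mathcal R_{23}+\sum_{n=2}^{k-1}\ \sum_{\substack{\ell_1+\dots+\ell_n=k-1\\ \ell_i\ge 1}}c^{k-1}_{\ell_1,\dots,\ell_n}\Big[\tilde{\mathcal Q}^{(\bar\ell_{n-1})}_{23},\Big[\tilde{\mathcal Q}^{(\bar\ell_{n-2})}_{23},\Big[\cdots,\Big[\tilde{\mathcal Q}^{(\bar\ell_1)}_{23},\mathcal R^{-1}_{23}\tilde{\mathcal Q}^{(\bar\ell_n)}_{13}\mathcal R_{23}\Big]\cdots\Big]\Big]\Big],$$ where $\bar\ell_i=\ell_i+1$ and $c^{k-1}_{\ell_1,\dots,\ell_n}:=\prod_{m=2}^{n}\binom{\sum_{i=1}^{m}\ell_i-1}{\sum_{i=1}^{m-1}\ell_i}$.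 Here every $\mathcal R_{ij}$, $\mathcal Q_{ij}$, $\tilde{\mathcal Q}_{ij}$ is evaluated at $(u_i,u_j)$.
   Context: Let $V$ be a finite-dimensional complex vector space, $\mathcal P$ the flip $v\otimes w\mapsto w\otimes v$ on $V\otimes V$, and $\mathcal R(u,v)\in\mathrm{End}(V\otimes V)[[u,v]]$ analytic around $0$, satisfying the Yang–Baxter equation $\mathcal R_{12}(u_1,u_2)\mathcal R_{13}(u_1,u_3)\mathcal R_{23}(u_2,u_3)=\mathcal R_{23}(u_2,u_3)\mathcal R_{13}(u_1,u_3)\mathcal R_{12}(u_1,u_2)$, regularity $\mathcal R(u,u)=\mathcal P$ and unitarity $\mathcal R_{12}(u,v)\mathcal R_{21}(v,u)=1$. Subscripts denote the tensor slots of $V^{\otimes n}$ on which a matrix acts; each slot $i$ carries a spectral parameter $u_i$. For ordered lists of distinct slots $I=(i_1,\dots,i_N)$, $J=(j_1,\dots,j_M)$ put $\mathcal R_{IJ}:=\prod_{p=1}^{N}\big(\mathcal R_{i_pj_M}(u_{i_p},u_{j_M})\cdots\mathcal R_{i_pj_1}(u_{i_p},u_{j_1})\big)$, the factors for $p=1,\dots,N$ multiplied from left to right (e.g. $\mathcal R_{1(23)}=\mathcal R_{13}\mathcal R_{12}$, $\mathcal R_{(12)3}=\mathcal R_{13}\mathcal R_{23}$); a list with one slot is written without brackets. Let $D_I:=\sum_{i\in I}\partial/\partial u_i$. For $k\ge 2$ the algebraic charge densities are $\mathcal Q^{(k)}_{IJ}:=D_I^{\,k-2}\big(\mathcal R_{IJ}^{-1}D_I\mathcal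 R_{IJ}\big)$ and $\tilde{\mathcal Q}^{(k)}_{IJ}:=-D_J^{\,k-2}\big(\mathcal R_{IJ}^{-1}D_J\mathcal R_{IJ}\big)$, as functions of the spectral parameters of the slots in $I$ and $J$. *)

theory Defs
  imports "HOL-Analysis.Analysis"
begin

text \<open>V = complex^'d with basis indexed by the finite type 'd.
  Operators on V\<otimes>V are matrices indexed by 'd \<times> 'd; operators on
  V\<otimes>V\<otimes>V are matrices indexed by 'd \<times> 'd \<times> 'd (slots 1,2,3).\<close>

type_synonym 'd op2 = "complex^('d \<times> 'd)^('d \<times> 'd)"
type_synonym 'd op3 = "complex^('d \<times> 'd \<times> 'd)^('d \<times> 'd \<times> 'd)"

definition flipP :: "'d::finite op2" where
  "flipP = (\<chi> x y. if fst x = snd y \<and> snd x = fst y then 1 else 0)"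

text \<open>M_21 := P M P, i.e. M acting with the tensor slots exchanged.\<close>
definition swap21 :: "'d::finite op2 \<Rightarrow> 'd op2" where
  "swap21 M = (\<chi> x y. M $ (snd x, fst x) $ (snd y, fst y))"

definition ix :: "nat \<Rightarrow> ('d::finite \<times> 'd \<times> 'd) \<Rightarrow> 'd" where
  "ix m x = (if m = 1 then fst x else if m = 2 then fst (snd x) else snd (snd x))"

text \<open>Spectral parameters: slot m carries u m.  R_ij(u_i,u_j) acting on slots
  i,j of V\<otimes>V\<otimes>V (identity on the remaining slot).\<close>
definition Rslot :: "(complex \<Rightarrow> complex \<Rightarrow> 'd::finite op2) \<Rightarrow> nat \<Rightarrow> nat \<Rightarrow> (nat \<Rightarrow> complex) \<Rightarrow> 'd op3" where
  "Rslot R i j u = (\<chi> x y. R (u i) (u j) $ (ix i x, ix j x) $ (ix i y, ix j y) *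
      (if (\<forall>m\<in>{1,2,3} - {i,j}. ix m x = ix m y) then 1 else 0))"

text \<open>R_IJ = prod_{p=1..N} (R_{i_p j_M} ... R_{i_p j_1}), left to right.\<close>
definition RIJ :: "(complex \<Rightarrow> complex \<Rightarrow> 'd::finite op2) \<Rightarrow> nat list \<Rightarrow> nat list \<Rightarrow> (nat \<Rightarrow> complex) \<Rightarrow> 'd op3" where
  "RIJ R I J u = foldl (**) (mat 1) (concat (map (\<lambda>p. map (\<lambda>j. Rslot R p j u) (rev J)) I))"

definition mderiv :: "(complex \<Rightarrow> complex^'n::finite^'m::finite) \<Rightarrow> complex \<Rightarrow> complex^'n^'m" where
  "mderiv F t = (\<chi> i j. deriv (\<lambda>s. F s $ i $ j) t)"

text \<open>Shift all spectral parameters of the slots in I by t.  Then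
  (D_I^m f)(u) = (d/dt)^m f(shiftI I u t) at t = 0.\<close>
definition shiftI :: "nat list \<Rightarrow> (nat \<Rightarrow> complex) \<Rightarrow> complex \<Rightarrow> (nat \<Rightarrow> complex)" where
  "shiftI I u t = (\<lambda>i. if i \<in> set I then u i + t else u i)"

definition Qk :: "(complex \<Rightarrow> complex \<Rightarrow> 'd::finite op2) \<Rightarrow> nat \<Rightarrow> nat list \<Rightarrow> nat list \<Rightarrow> (nat \<Rightarrow> complex) \<Rightarrow> 'd op3" where
  "Qk R k I J u =
     (let F = (\<lambda>s. RIJ R I J (shiftI I u s))
      in ((mderiv ^^ (k - 2)) (\<lambda>t. matrix_inv (F t) ** mderiv F t)) 0)"

definition Qtk :: "(complex \<Rightarrow> complex \<Rightarrow> 'd::finite op2) \<Rightarrow> nat \<Rightarrow> nat list \<Rightarrow> nat list \<Rightarrow> (nat \<Rightarrow> complex) \<Rightarrow> 'd op3" where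
  "Qtk R k I J u =
     (let F = (\<lambda>s. RIJ R I J (shiftI J u s))
      in - ((mderiv ^^ (k - 2)) (\<lambda>t. matrix_inv (F t) ** mderiv F t)) 0)"

definition comm :: "'d::finite op3 \<Rightarrow> 'd op3 \<Rightarrow> 'd op3" where
  "comm A B = A ** B - B ** A"

definition compositions :: "nat \<Rightarrow> nat \<Rightarrow> nat list set" where
  "compositions N n = {ls. length ls = n \<and> (\<forall>l\<in>set ls. 1 \<le> l) \<and> sum_list ls = N}"

definition ccoef :: "nat list \<Rightarrow> nat" where
  "ccoef ls = (\<Prod>m=2..length ls. (sum_list (take m ls) - 1) choose (sum_list (take (m - 1) ls)))"

end

theory Submission
  imports Defs "HOL-Complex_Analysis.Complex_Analysis"
begin


lemma powser_hol:
  fixes h :: "nat \<Rightarrow> nat \<Rightarrow> complex" and F :: "complex \<Rightarrow> complex"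
  assumes H: "\<And>a. norm a < r \<Longrightarrow> ((\<lambda>(m,n). h m n * a^m) has_sum F a) UNIV"
  shows "F holomorphic_on ball 0 r"
proof -
  define g where "g m = infsum (h m) UNIV" for m
  have ser: "(\<lambda>m. g m * a^m) sums F a" if "norm a < r" for a
  proof -
    have sm: "(\<lambda>(m,n). h m n * a^m) summable_on (UNIV \<times> UNIV)"
      using H[OF that] has_sum_imp_summable by (simp add: UNIV_Times_UNIV)
    have inner: "infsum (\<lambda>n. h m n * a^m) UNIV = g m * a^m" for m
      by (simp add: g_def infsum_cmult_left')
    have e1: "infsum (\<lambda>m. infsum (\<lambda>n. h m n * a^m) UNIV) UNIV = F a"
      using infsum_Sigma'_banach[OF sm] infsumI[OF H[OF that]] by (simp add: UNIV_Times_UNIV)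
    have s1: "(\<lambda>m. infsum (\<lambda>n. h m n * a^m) UNIV) summable_on UNIV"
      using summable_on_Sigma_banach[OF sm] by simp
    have "((\<lambda>m. g m * a^m) has_sum F a) UNIV"
      using s1 e1 unfolding inner by (metis has_sum_infsum)
    then show ?thesis by (rule has_sum_imp_sums)
  qed
  have d: "((\<lambda>z. \<Sum>n. g n * z^n) has_field_derivative (\<Sum>n. diffs g n * z^n)) (at z)"
    if "norm z < r" for z
    using termdiffs_strong'[of r g z] ser that sums_summable by blast
  have "(\<lambda>z. \<Sum>n. g n * z^n) holomorphic_on ball 0 r"
    unfolding holomorphic_on_open[OF open_ball] field_differentiable_def
  proof
    fix z :: complex assume "z \<in> ball 0 r"
    then have "norm z < r" by simp
    then show "\<exists>f'. ((\<lambda>z. \<Sum>n. g n * z^n) has_field_derivative f') (at z)" using d[OF \<open>norm z < r\<close>] by blast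
  qed
  moreover have "\<And>z. z \<in> ball 0 r \<Longrightarrow> (\<Sum>n. g n * z^n) = F z"
    using ser sums_unique by (metis dist_0_norm mem_ball)
  ultimately show ?thesis by (rule holomorphic_transform)
qed


lemma sum_UNIV_pair: "(\<Sum>z\<in>UNIV. f z) = (\<Sum>a\<in>(UNIV::'a::finite set). \<Sum>b\<in>(UNIV::'b::finite set). f (a,b))"
  by (simp add: sum.cartesian_product UNIV_Times_UNIV[symmetric] del: UNIV_Times_UNIV)

lemma sum3_12: fixes f :: "'a::finite \<times> 'b::finite \<times> 'c::finite \<Rightarrow> 'e::comm_monoid_add" shows "(\<Sum>z\<in>UNIV. f z) = (\<Sum>a\<in>UNIV. \<Sum>b\<in>UNIV. \<Sum>c\<in>UNIV. f (a,b,c))"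
proof -
  have "(\<Sum>z\<in>UNIV. f z) = (\<Sum>a\<in>UNIV. \<Sum>p\<in>UNIV. f (a,p))" by (rule sum_UNIV_pair)
  also have "\<dots> = (\<Sum>a\<in>UNIV. \<Sum>b\<in>UNIV. \<Sum>c\<in>UNIV. f (a,b,c))" by (rule sum.cong[OF refl], rule sum_UNIV_pair)
  finally show ?thesis .
qed
lemma sum3_13: fixes f :: "'a::finite \<times> 'b::finite \<times> 'c::finite \<Rightarrow> 'e::comm_monoid_add" shows "(\<Sum>z\<in>UNIV. f z) = (\<Sum>a\<in>UNIV. \<Sum>c\<in>UNIV. \<Sum>b\<in>UNIV. f (a,b,c))"
  by (subst sum3_12, rule sum.cong[OF refl], rule sum.swap)
lemma sum3_23: fixes f :: "'a::finite \<times> 'b::finite \<times> 'c::finite \<Rightarrow> 'e::comm_monoid_add" shows "(\<Sum>z\<in>UNIV. f z) = (\<Sum>b\<in>UNIV. \<Sum>c\<in>UNIV. \<Sum>a\<in>UNIV. f (a,b,c))"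
proof -
  have "(\<Sum>z\<in>UNIV. f z) = (\<Sum>a\<in>UNIV. \<Sum>b\<in>UNIV. \<Sum>c\<in>UNIV. f (a,b,c))" by (rule sum3_12)
  also have "\<dots> = (\<Sum>b\<in>UNIV. \<Sum>a\<in>UNIV. \<Sum>c\<in>UNIV. f (a,b,c))" by (rule sum.swap)
  also have "\<dots> = (\<Sum>b\<in>UNIV. \<Sum>c\<in>UNIV. \<Sum>a\<in>UNIV. f (a,b,c))" by (rule sum.cong[OF refl], rule sum.swap)
  finally show ?thesis .
qed

lemma delta2: fixes x y :: "'b::finite" shows "(\<Sum>c\<in>UNIV. if x = c \<and> c = y then g else 0) = (if x = y then g else (0::'a::comm_monoid_add))"
proof -
  have "\<And>c. (if x = c \<and> c = y then g else 0) = (if x = c then (if x = y then g else 0) else 0)" by auto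
  then show ?thesis by (simp add: sum.delta sum.delta')
qed

lemma mult_if10: "(x::'a::semiring_1) * (if P then 1 else 0) = (if P then x else 0)"
   "(if P then 1 else 0) * (x::'a::semiring_1) = (if P then x else 0)"
  by auto
lemma if_if_mult: "(if P then (x::'a::semiring_1) else 0) * (if Q then y else 0) = (if P \<and> Q then x * y else 0)"
  by auto

lemma Rslot12: "Rslot R 1 2 w $ (x1,x2,x3) $ (y1,y2,y3) = R (w 1) (w 2) $ (x1,x2) $ (y1,y2) * (if x3 = y3 then 1 else 0)"
  unfolding Rslot_def ix_def by (auto simp: insert_Diff_if)
lemma Rslot13: "Rslot R 1 3 w $ (x1,x2,x3) $ (y1,y2,y3) = R (w 1) (w 3) $ (x1,x3) $ (y1,y3) * (if x2 = y2 then 1 else 0)"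
  unfolding Rslot_def ix_def by (auto simp: insert_Diff_if)
lemma Rslot23: "Rslot R 2 3 w $ (x1,x2,x3) $ (y1,y2,y3) = R (w 2) (w 3) $ (x2,x3) $ (y2,y3) * (if x1 = y1 then 1 else 0)"
  unfolding Rslot_def ix_def by (auto simp: insert_Diff_if)

lemma prod12: fixes M N :: "complex \<Rightarrow> complex \<Rightarrow> 'd::finite op2"
  shows "(Rslot M 1 2 w ** Rslot N 1 2 w) $ (x1,x2,x3) $ (y1,y2,y3) = (M (w 1) (w 2) ** N (w 1) (w 2)) $ (x1,x2) $ (y1,y2) * (if x3=y3 then 1 else 0)"
  unfolding matrix_matrix_mult_def vec_lambda_beta
  apply (subst sum3_12)
  apply (subst sum_UNIV_pair)
  apply (simp only: Rslot12 mult_if10 if_if_mult mult.assoc)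
  apply (simp add: delta2 sum_distrib_right)
  done

lemma prod13: fixes M N :: "complex \<Rightarrow> complex \<Rightarrow> 'd::finite op2"
  shows "(Rslot M 1 3 w ** Rslot N 1 3 w) $ (x1,x2,x3) $ (y1,y2,y3) = (M (w 1) (w 3) ** N (w 1) (w 3)) $ (x1,x3) $ (y1,y3) * (if x2=y2 then 1 else 0)"
  unfolding matrix_matrix_mult_def vec_lambda_beta
  apply (subst sum3_13)
  apply (subst sum_UNIV_pair)
  apply (simp only: Rslot13 mult_if10 if_if_mult mult.assoc)
  apply (simp add: delta2 sum_distrib_right)
  done
lemma prod23: fixes M N :: "complex \<Rightarrow> complex \<Rightarrow> 'd::finite op2"
  shows "(Rslot M 2 3 w ** Rslot N 2 3 w) $ (x1,x2,x3) $ (y1,y2,y3) = (M (w 2) (w 3) ** N (w 2) (w 3)) $ (x2,x3) $ (y2,y3) * (if x1=y1 then 1 else 0)"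
  unfolding matrix_matrix_mult_def vec_lambda_beta
  apply (subst sum3_23)
  apply (subst sum_UNIV_pair)
  apply (simp only: Rslot23 mult_if10 if_if_mult mult.assoc)
  apply (simp add: delta2 sum_distrib_right)
  done

lemma inv12: fixes M N :: "complex \<Rightarrow> complex \<Rightarrow> 'd::finite op2"
  assumes "M (w 1) (w 2) ** N (w 1) (w 2) = mat 1"
  shows "Rslot M 1 2 w ** Rslot N 1 2 w = mat 1"
  by (simp add: vec_eq_iff split_paired_all prod12 prod12[unfolded One_nat_def] assms assms[unfolded One_nat_def]) (simp add: mat_def)
lemma inv13: fixes M N :: "complex \<Rightarrow> complex \<Rightarrow> 'd::finite op2"
  assumes "M (w 1) (w 3) ** N (w 1) (w 3) = mat 1"
  shows "Rslot M 1 3 w ** Rslot N 1 3 w = mat 1"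
  by (simp add: vec_eq_iff split_paired_all prod13 prod13[unfolded One_nat_def] assms assms[unfolded One_nat_def]) (auto simp add: mat_def)
lemma inv23: fixes M N :: "complex \<Rightarrow> complex \<Rightarrow> 'd::finite op2"
  assumes "M (w 2) (w 3) ** N (w 2) (w 3) = mat 1"
  shows "Rslot M 2 3 w ** Rslot N 2 3 w = mat 1"
  by (simp add: vec_eq_iff split_paired_all prod23 prod23[unfolded One_nat_def] assms assms[unfolded One_nat_def]) (auto simp add: mat_def)


definition mhol :: "complex set \<Rightarrow> (complex \<Rightarrow> complex^'n::finite^'m::finite) \<Rightarrow> bool" where
  "mhol S F \<longleftrightarrow> (\<forall>i j. (\<lambda>t. F t $ i $ j) holomorphic_on S)"

lemma mhol_D: "mhol S F \<Longrightarrow> open S \<Longrightarrow> t \<in> S \<Longrightarrow> (\<lambda>t. F t $ i $ j) field_differentiable (at t)"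
  unfolding mhol_def using holomorphic_on_imp_differentiable_at by blast

lemma mhol_mderiv: "open S \<Longrightarrow> mhol S F \<Longrightarrow> mhol S (mderiv F)"
  unfolding mhol_def mderiv_def by (simp add: holomorphic_deriv)

lemma mhol_funpow: "open S \<Longrightarrow> mhol S F \<Longrightarrow> mhol S ((mderiv ^^ n) F)"
  by (induction n) (auto intro: mhol_mderiv)

lemma mhol_const: "mhol S (\<lambda>t. M)"
  unfolding mhol_def by simp

lemma mhol_add: "mhol S F \<Longrightarrow> mhol S G \<Longrightarrow> mhol S (\<lambda>t. F t + G t)"
  unfolding mhol_def by (auto intro: holomorphic_intros)
lemma mhol_diff: "mhol S F \<Longrightarrow> mhol S G \<Longrightarrow> mhol S (\<lambda>t. F t - G t)"
  unfolding mhol_def by (auto intro: holomorphic_intros)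
lemma mhol_neg: "mhol S F \<Longrightarrow> mhol S (\<lambda>t. - F t)"
  unfolding mhol_def by (auto intro: holomorphic_intros)
lemma mhol_scaleR: "mhol S F \<Longrightarrow> mhol S (\<lambda>t. c *\<^sub>R F t)"
  unfolding mhol_def by (auto simp: scaleR_conv_of_real intro: holomorphic_intros)
lemma mhol_mult: "mhol S F \<Longrightarrow> mhol S G \<Longrightarrow> mhol S (\<lambda>t. F t ** G t)"
  unfolding mhol_def matrix_matrix_mult_def by (auto intro!: holomorphic_intros)
lemma mhol_sum: "(\<And>a. a \<in> A \<Longrightarrow> mhol S (F a)) \<Longrightarrow> mhol S (\<lambda>t. \<Sum>a\<in>A. F a t)"
  unfolding mhol_def by (auto simp: sum_component intro!: holomorphic_intros)
lemma mhol_cong: assumes "mhol S F" "\<And>t. t \<in> S \<Longrightarrow> F t = G t" shows "mhol S G"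
  unfolding mhol_def
proof (intro allI)
  fix i j
  have "(\<lambda>t. F t $ i $ j) holomorphic_on S" using assms(1) unfolding mhol_def by blast
  then show "(\<lambda>t. G t $ i $ j) holomorphic_on S" by (rule holomorphic_transform) (simp add: assms(2))
qed

lemma mderiv_cong: "open S \<Longrightarrow> (\<And>t. t \<in> S \<Longrightarrow> F t = G t) \<Longrightarrow> t \<in> S \<Longrightarrow> mderiv F t = mderiv G t"
  unfolding mderiv_def
  by (auto simp: vec_eq_iff intro!: deriv_cong_ev eventually_nhds_in_open[THEN eventually_mono])

lemma funpow_cong: "open S \<Longrightarrow> (\<And>t. t \<in> S \<Longrightarrow> F t = G t) \<Longrightarrow> t \<in> S \<Longrightarrow> (mderiv ^^ n) F t = (mderiv ^^ n) G t"
proof (induction n arbitrary: t)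
  case 0 then show ?case by simp
next
  case (Suc n) then show ?case by (simp add: mderiv_cong[of S "(mderiv ^^ n) F" "(mderiv ^^ n) G"])
qed

lemma mderiv_add: "open S \<Longrightarrow> mhol S F \<Longrightarrow> mhol S G \<Longrightarrow> t \<in> S \<Longrightarrow>
   mderiv (\<lambda>t. F t + G t) t = mderiv F t + mderiv G t"
  unfolding mderiv_def by (simp add: vec_eq_iff mhol_D)
lemma mderiv_diff: "open S \<Longrightarrow> mhol S F \<Longrightarrow> mhol S G \<Longrightarrow> t \<in> S \<Longrightarrow>
   mderiv (\<lambda>t. F t - G t) t = mderiv F t - mderiv G t"
  unfolding mderiv_def by (simp add: vec_eq_iff mhol_D)
lemma mderiv_neg: "open S \<Longrightarrow> mhol S F \<Longrightarrow> t \<in> S \<Longrightarrow>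
   mderiv (\<lambda>t. - F t) t = - mderiv F t"
  unfolding mderiv_def by (simp add: vec_eq_iff mhol_D)
lemma mderiv_const: "mderiv (\<lambda>t. M) t = 0"
  unfolding mderiv_def by (simp add: vec_eq_iff)
lemma mderiv_scaleR: "open S \<Longrightarrow> mhol S F \<Longrightarrow> t \<in> S \<Longrightarrow>
   mderiv (\<lambda>t. c *\<^sub>R F t) t = c *\<^sub>R mderiv F t"
  unfolding mderiv_def by (simp add: vec_eq_iff mhol_D scaleR_conv_of_real deriv_cmult)
lemma mderiv_mult: "open S \<Longrightarrow> mhol S F \<Longrightarrow> mhol S G \<Longrightarrow> t \<in> S \<Longrightarrow>
   mderiv (\<lambda>t. F t ** G t) t = mderiv F t ** G t + F t ** mderiv G t"
  unfolding mderiv_def matrix_matrix_mult_def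
  by (simp add: vec_eq_iff mhol_D field_differentiable_mult deriv_sum sum.distrib[symmetric] algebra_simps)
lemma mderiv_sum: "open S \<Longrightarrow> (\<And>a. a \<in> A \<Longrightarrow> mhol S (F a)) \<Longrightarrow> t \<in> S \<Longrightarrow>
   mderiv (\<lambda>t. \<Sum>a\<in>A. F a t) t = (\<Sum>a\<in>A. mderiv (F a) t)"
proof (induction A rule: infinite_finite_induct)
  case (infinite A) then show ?case by (simp add: mderiv_const)
next
  case empty then show ?case by (simp add: mderiv_const)
next
  case (insert x F') then show ?case
    by (simp add: mderiv_add mhol_sum)
qed


fun cc :: "nat \<Rightarrow> nat list \<Rightarrow> nat" where
  "cc a [] = 1"
| "cc a (l # ls) = ((a + l - 1) choose a) * cc (a + l) ls"

lemma upd_Cons_Suc: "(x # xs)[Suc i := y] = x # xs[i := y]" by simp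

definition Dc :: "nat \<Rightarrow> nat list \<Rightarrow> nat" where
  "Dc a ls = (\<Sum>i<length ls. if 2 \<le> ls ! i then cc a (ls[i := ls ! i - 1]) else 0)"

lemma Dc_Nil: "Dc a [] = 0" by (simp add: Dc_def)

lemma Dc_Cons: "Dc a (l # rest) = (if 2 \<le> l then cc a ((l - 1) # rest) else 0) + ((a + l - 1) choose a) * Dc (a + l) rest"
proof -
  have "Dc a (l # rest) = (\<Sum>i<Suc (length rest). if 2 \<le> (l # rest) ! i then cc a ((l # rest)[i := (l # rest) ! i - 1]) else 0)"
    unfolding Dc_def by simp
  also have "\<dots> = (if 2 \<le> l then cc a ((l - 1) # rest) else 0) + (\<Sum>i<length rest. if 2 \<le> rest ! i then cc a (l # rest[i := rest ! i - 1]) else 0)"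
    by (subst sum.lessThan_Suc_shift) (simp add: upd_Cons_Suc cong: if_cong)
  also have "(\<Sum>i<length rest. if 2 \<le> rest ! i then cc a (l # rest[i := rest ! i - 1]) else 0) = ((a + l - 1) choose a) * Dc (a + l) rest"
    unfolding Dc_def sum_distrib_left by (rule sum.cong) auto
  finally show ?thesis .
qed

lemma ccA: "(\<forall>l\<in>set ls. 1 \<le> l) \<Longrightarrow> 1 \<le> b \<Longrightarrow> Dc b ls + cc (b - 1) ls = cc b ls"
proof (induction ls arbitrary: b)
  case Nil then show ?case by (simp add: Dc_Nil)
next
  case (Cons l rest)
  have l1: "1 \<le> l" and r: "\<forall>l\<in>set rest. 1 \<le> l" using Cons.prems by auto
  have IH: "Dc (b + l) rest + cc (b + l - 1) rest = cc (b + l) rest"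
    using Cons.IH[OF r] Cons.prems by simp
  have pas: "(if 2 \<le> l then (b + l - 2) choose b else 0) + ((b + l - 2) choose (b - 1)) = (b + l - 1) choose b"
  proof (cases "2 \<le> l")
    case True
    define n where "n = b + l - 2"
    define k where "k = b - 1"
    have nk: "b + l - 1 = Suc n" "b = Suc k" using True Cons.prems(2) unfolding n_def k_def by arith+
    have "(b + l - 1) choose b = (Suc n) choose (Suc k)" using nk by simp
    also have "\<dots> = (n choose k) + (n choose (Suc k))"
      by (rule binomial_Suc_Suc)
    finally show ?thesis using True nk unfolding n_def k_def by simp
  next
    case False
    then have "l = 1" using l1 by simp
    then show ?thesis using Cons.prems by simp
  qed
  have ar: "b + (l - 1) - 1 = b + l - 2" "b + (l - 1) = b + l - 1" "b - 1 + l - 1 = b + l - 2" "b - 1 + l = b + l - 1"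
    using l1 Cons.prems(2) by arith+
  have e1: "cc b ((l - 1) # rest) = ((b + l - 2) choose b) * cc (b + l - 1) rest"
    using ar by simp
  have e2: "cc (b - 1) (l # rest) = ((b + l - 2) choose (b - 1)) * cc (b + l - 1) rest"
    using ar by simp
  have "Dc b (l # rest) + cc (b - 1) (l # rest)
      = (if 2 \<le> l then (b + l - 2) choose b else 0) * cc (b + l - 1) rest
        + ((b + l - 1) choose b) * Dc (b + l) rest + ((b + l - 2) choose (b - 1)) * cc (b + l - 1) rest"
    by (cases "2 \<le> l") (simp_all only: Dc_Cons e1 e2 if_True if_False distrib_right mult_zero_left add_0)
  also have "\<dots> = ((b + l - 1) choose b) * (Dc (b + l) rest + cc (b + l - 1) rest)"
  proof -
    define I where "I = (if 2 \<le> l then (b + l - 2) choose b else 0)"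
    define C2 where "C2 = (b + l - 2) choose (b - 1)"
    define C3 where "C3 = (b + l - 1) choose b"
    have p: "I + C2 = C3" using pas unfolding I_def C2_def C3_def .
    have "I * cc (b + l - 1) rest + C3 * Dc (b + l) rest + C2 * cc (b + l - 1) rest
        = C3 * (Dc (b + l) rest + cc (b + l - 1) rest)"
      unfolding p[symmetric] by (simp add: algebra_simps)
    then show ?thesis unfolding I_def C2_def C3_def .
  qed
  also have "\<dots> = cc b (l # rest)" using IH by simp
  finally show ?case .
qed

lemma ccB: assumes all: "\<forall>l\<in>set ls. 1 \<le> l" and ne: "ls \<noteq> []"
  shows "Dc 0 ls + (if hd ls = 1 then cc 0 (tl ls) else 0) = cc 0 ls"
proof (cases ls)
  case Nil
  then show ?thesis using ne by simp
next
  case (Cons l rest)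
  from all have l1: "1 \<le> l" and r: "\<forall>l\<in>set rest. 1 \<le> l" using Cons by auto
  have A: "Dc l rest + cc (l - 1) rest = cc l rest" using ccA[OF r l1] .
  show ?thesis
  proof (cases "l = 1")
    case True
    then show ?thesis using A Cons by (simp add: Dc_Cons)
  next
    case False
    then have "2 \<le> l" using l1 by simp
    then show ?thesis using A Cons False by (simp add: Dc_Cons)
  qed
qed

definition ccg :: "nat \<Rightarrow> nat list \<Rightarrow> nat" where
  "ccg a ls = (\<Prod>m=1..length ls. (a + sum_list (take m ls) - 1) choose (a + sum_list (take (m - 1) ls)))"

lemma prod_shift_Cons:
  "(\<Prod>m=Suc 1..Suc (length ls). (a + sum_list (take m (l # ls)) - 1) choose (a + sum_list (take (m - 1) (l # ls))))
   = ccg (a + l) ls"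
  unfolding ccg_def prod.shift_bounds_cl_Suc_ivl
proof (rule prod.cong[OF refl])
  fix m assume "m \<in> {1..length ls}"
  then have "1 \<le> m" by simp
  then have t: "take (Suc m - 1) (l # ls) = l # take (m - 1) ls"
    by (cases m) auto
  show "(a + sum_list (take (Suc m) (l # ls)) - 1) choose (a + sum_list (take (Suc m - 1) (l # ls))) =
        (a + l + sum_list (take m ls) - 1) choose (a + l + sum_list (take (m - 1) ls))"
    unfolding t by (simp add: add.assoc)
qed

lemma ccg_Cons: "ccg a (l # ls) = ((a + l - 1) choose a) * ccg (a + l) ls"
proof -
  have "ccg a (l # ls) = (\<Prod>m=1..Suc (length ls). (a + sum_list (take m (l # ls)) - 1) choose (a + sum_list (take (m - 1) (l # ls))))"
    unfolding ccg_def by simp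
  also have "\<dots> = ((a + l - 1) choose a) * (\<Prod>m=Suc 1..Suc (length ls). (a + sum_list (take m (l # ls)) - 1) choose (a + sum_list (take (m - 1) (l # ls))))"
    by (subst prod.atLeast_Suc_atMost) simp_all
  finally show ?thesis unfolding prod_shift_Cons .
qed

lemma ccg_cc: "ccg a ls = cc a ls"
  by (induction ls arbitrary: a) (simp_all add: ccg_Cons, simp add: ccg_def)

lemma ccoef_cc: "ccoef ls = cc 0 ls"
proof (cases ls)
  case Nil then show ?thesis by (simp add: ccoef_def)
next
  case (Cons l rest)
  have "ccoef (l # rest) = ccg l rest"
    unfolding ccoef_def using prod_shift_Cons[of 0 l rest] by (simp add: numeral_2_eq_2)
  then show ?thesis using Cons by (simp add: ccg_cc)
qed

definition CC :: "nat \<Rightarrow> nat list set" where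
  "CC N = {ls. (\<forall>l\<in>set ls. 1 \<le> l) \<and> sum_list ls = N}"

lemma length_le_sum_list: "(\<forall>l\<in>set ls. 1 \<le> l) \<Longrightarrow> length ls \<le> sum_list ls"
  by (induction ls) auto

lemma finite_CC: "finite (CC N)"
proof (rule finite_subset)
  show "CC N \<subseteq> {ls. set ls \<subseteq> {0..N} \<and> length ls \<le> N}"
    unfolding CC_def using length_le_sum_list member_le_sum_list by fastforce
  show "finite {ls. set ls \<subseteq> {0..N} \<and> length ls \<le> N}"
    by (rule finite_lists_length_le) simp
qed

lemma sum_identity:
  fixes W :: "nat list \<Rightarrow> 'v::real_vector"
  shows "(\<Sum>ls\<in>CC N. real (ccoef ls) *\<^sub>R ((\<Sum>i<length ls. W (ls[i := ls ! i + 1])) + W (1 # ls)))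
       = (\<Sum>ls\<in>CC (Suc N). real (ccoef ls) *\<^sub>R W ls)"
proof -
  define P where "P = Sigma (CC N) (\<lambda>ls. {..<length ls})"
  define P' where "P' = Sigma (CC (Suc N)) (\<lambda>ls. {i. i < length ls \<and> 2 \<le> ls ! i})"
  have fP: "finite P" unfolding P_def by (auto intro: finite_CC)
  have fP': "finite P'" unfolding P'_def by (auto intro: finite_CC)
  have ne: "ls \<noteq> []" if "ls \<in> CC (Suc N)" for ls using that unfolding CC_def by auto
  have R1: "(\<Sum>ls\<in>CC (Suc N). real (ccoef ls) *\<^sub>R W ls)
      = (\<Sum>ls\<in>CC (Suc N). real (Dc 0 ls) *\<^sub>R W ls) + (\<Sum>ls\<in>CC (Suc N). if hd ls = 1 then real (cc 0 (tl ls)) *\<^sub>R W ls else 0)"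
  proof -
    have "real (ccoef ls) *\<^sub>R W ls = real (Dc 0 ls) *\<^sub>R W ls + (if hd ls = 1 then real (cc 0 (tl ls)) *\<^sub>R W ls else 0)"
      if "ls \<in> CC (Suc N)" for ls
    proof -
      have "ccoef ls = Dc 0 ls + (if hd ls = 1 then cc 0 (tl ls) else 0)"
        using ccB[of ls] that ne[OF that] unfolding CC_def ccoef_cc by simp
      then show ?thesis by (simp add: scaleR_add_left)
    qed
    then show ?thesis by (simp add: sum.distrib)
  qed
  have R2: "(\<Sum>ls\<in>CC (Suc N). real (Dc 0 ls) *\<^sub>R W ls) = (\<Sum>(ls, i)\<in>P'. real (cc 0 (ls[i := ls ! i - 1])) *\<^sub>R W ls)"
  proof -
    have "real (Dc 0 ls) *\<^sub>R W ls = (\<Sum>i\<in>{i. i < length ls \<and> 2 \<le> ls ! i}. real (cc 0 (ls[i := ls ! i - 1])) *\<^sub>R W ls)" for ls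
    proof -
      have "real (Dc 0 ls) *\<^sub>R W ls = (\<Sum>i<length ls. if 2 \<le> ls ! i then real (cc 0 (ls[i := ls ! i - 1])) *\<^sub>R W ls else 0)"
        unfolding Dc_def by (simp add: scaleR_sum_left if_distrib[of "\<lambda>x. real x"] if_distrib[of "\<lambda>x. x *\<^sub>R _"] cong: if_cong)
      also have "\<dots> = (\<Sum>i\<in>{i. i < length ls \<and> 2 \<le> ls ! i}. real (cc 0 (ls[i := ls ! i - 1])) *\<^sub>R W ls)"
        by (simp add: sum.If_cases lessThan_def Collect_conj_eq Int_commute)
      finally show ?thesis .
    qed
    then show ?thesis unfolding P'_def by (simp add: sum.Sigma finite_CC)
  qed
  have R3: "(\<Sum>(ls, i)\<in>P'. real (cc 0 (ls[i := ls ! i - 1])) *\<^sub>R W ls) = (\<Sum>(ls, i)\<in>P. real (cc 0 ls) *\<^sub>R W (ls[i := ls ! i + 1]))"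
  proof (rule sum.reindex_bij_witness[of _ "\<lambda>(ls, i). (ls[i := ls ! i + 1], i)" "\<lambda>(ls, i). (ls[i := ls ! i - 1], i)"])
    fix a assume "a \<in> P'"
    then obtain ls i where a: "a = (ls, i)" "ls \<in> CC (Suc N)" "i < length ls" "2 \<le> ls ! i" unfolding P'_def by auto
    show "(case (case a of (ls, i) \<Rightarrow> (ls[i := ls ! i - 1], i)) of (ls, i) \<Rightarrow> (ls[i := ls ! i + 1], i)) = a"
      using a by simp
    have "\<forall>l\<in>set (ls[i := ls ! i - 1]). 1 \<le> l"
    proof
      fix l assume "l \<in> set (ls[i := ls ! i - 1])"
      then have "l = ls ! i - 1 \<or> l \<in> set ls" using set_update_subset_insert[of ls i "ls ! i - 1"] by blast
      then show "1 \<le> l" using a unfolding CC_def by auto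
    qed
    moreover have "sum_list (ls[i := ls ! i - 1]) = N" using a unfolding CC_def by (simp add: sum_list_update)
    ultimately show "(case a of (ls, i) \<Rightarrow> (ls[i := ls ! i - 1], i)) \<in> P" using a unfolding P_def CC_def by simp
    show "(case case a of (ls, i) \<Rightarrow> (ls[i := ls ! i - 1], i) of (ls, i) \<Rightarrow> real (cc 0 ls) *\<^sub>R W (ls[i := ls ! i + 1])) = 
          (case a of (ls, i) \<Rightarrow> real (cc 0 (ls[i := ls ! i - 1])) *\<^sub>R W ls)"
      using a by simp
  next
    fix b assume "b \<in> P"
    then obtain ls i where b: "b = (ls, i)" "ls \<in> CC N" "i < length ls" unfolding P_def by auto
    show "(case (case b of (ls, i) \<Rightarrow> (ls[i := ls ! i + 1], i)) of (ls, i) \<Rightarrow> (ls[i := ls ! i - 1], i)) = b"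
      using b by simp
    have "\<forall>l\<in>set (ls[i := ls ! i + 1]). 1 \<le> l"
    proof
      fix l assume "l \<in> set (ls[i := ls ! i + 1])"
      then have "l = ls ! i + 1 \<or> l \<in> set ls" using set_update_subset_insert[of ls i "ls ! i + 1"] by blast
      then show "1 \<le> l" using b unfolding CC_def by auto
    qed
    moreover have "sum_list (ls[i := ls ! i + 1]) = Suc N" using b unfolding CC_def by (simp add: sum_list_update)
    moreover have "1 \<le> ls ! i" using b unfolding CC_def by auto
    ultimately show "(case b of (ls, i) \<Rightarrow> (ls[i := ls ! i + 1], i)) \<in> P'" using b unfolding P'_def CC_def by simp
  qed
  have R4: "(\<Sum>ls\<in>CC (Suc N). if hd ls = 1 then real (cc 0 (tl ls)) *\<^sub>R W ls else 0) = (\<Sum>ls\<in>CC N. real (cc 0 ls) *\<^sub>R W (1 # ls))"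
  proof -
    have "(\<Sum>ls\<in>CC (Suc N). if hd ls = 1 then real (cc 0 (tl ls)) *\<^sub>R W ls else 0)
        = (\<Sum>ls\<in>{ls \<in> CC (Suc N). hd ls = 1}. real (cc 0 (tl ls)) *\<^sub>R W ls)"
      by (simp add: sum.inter_filter finite_CC)
    also have "\<dots> = (\<Sum>ls\<in>CC N. real (cc 0 ls) *\<^sub>R W (1 # ls))"
    proof (rule sum.reindex_bij_witness[of _ "\<lambda>ls. 1 # ls" "tl"])
      fix a assume "a \<in> {ls \<in> CC (Suc N). hd ls = 1}"
      then have a: "a \<in> CC (Suc N)" "hd a = 1" by auto
      then have "a \<noteq> []" using ne by blast
      then have a1: "a = 1 # tl a" using a by (cases a) auto
      show "1 # tl a = a" using a1 by simp
      have "sum_list a = 1 + sum_list (tl a)" by (subst a1) simp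
      moreover have "set (tl a) \<subseteq> set a" by (subst (2) a1) auto
      ultimately show "tl a \<in> CC N" using a unfolding CC_def by auto
      show "real (cc 0 (tl a)) *\<^sub>R W (1 # tl a) = real (cc 0 (tl a)) *\<^sub>R W a" using a1 by simp
    next
      fix b assume "b \<in> CC N"
      then show "tl (1 # b) = b" "1 # b \<in> {ls \<in> CC (Suc N). hd ls = 1}" unfolding CC_def by auto
    qed
    finally show ?thesis .
  qed
  have L: "(\<Sum>ls\<in>CC N. real (ccoef ls) *\<^sub>R ((\<Sum>i<length ls. W (ls[i := ls ! i + 1])) + W (1 # ls)))
      = (\<Sum>(ls, i)\<in>P. real (cc 0 ls) *\<^sub>R W (ls[i := ls ! i + 1])) + (\<Sum>ls\<in>CC N. real (cc 0 ls) *\<^sub>R W (1 # ls))"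
    unfolding P_def ccoef_cc
    by (simp add: scaleR_add_right sum.distrib scaleR_sum_right sum.Sigma finite_CC)
  show ?thesis unfolding L R1 R2 R3 R4 ..
qed


lemma mm_add_r: "((A::complex^'k::finite^'m::finite) + B) ** (C::complex^'n::finite^'k) = A ** C + B ** C"
  by (simp add: vec_eq_iff matrix_matrix_mult_def sum.distrib distrib_right)
lemma mm_diff_r: "((A::complex^'k::finite^'m::finite) - B) ** (C::complex^'n::finite^'k) = A ** C - B ** C"
  by (simp add: vec_eq_iff matrix_matrix_mult_def sum_subtractf left_diff_distrib)
lemma mm_diff_l: "(C::complex^'k::finite^'m::finite) ** ((A::complex^'n::finite^'k) - B) = C ** A - C ** B"
  by (simp add: vec_eq_iff matrix_matrix_mult_def sum_subtractf right_diff_distrib)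
lemma mm_neg_r: "(- (A::complex^'k::finite^'m::finite)) ** (C::complex^'n::finite^'k) = - (A ** C)"
  by (simp add: vec_eq_iff matrix_matrix_mult_def sum_negf)
lemma mm_neg_l: "(C::complex^'k::finite^'m::finite) ** (- (A::complex^'n::finite^'k)) = - (C ** A)"
  by (simp add: vec_eq_iff matrix_matrix_mult_def sum_negf)
lemma mm_scaleR_r: "(c *\<^sub>R (A::complex^'k::finite^'m::finite)) ** (C::complex^'n::finite^'k) = c *\<^sub>R (A ** C)"
  by (simp add: vec_eq_iff matrix_matrix_mult_def scaleR_sum_right)
lemma mm_scaleR_l: "(C::complex^'k::finite^'m::finite) ** (c *\<^sub>R (A::complex^'n::finite^'k)) = c *\<^sub>R (C ** A)"
  by (simp add: vec_eq_iff matrix_matrix_mult_def scaleR_sum_right)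
lemma mm_zero_r: "(0::complex^'k::finite^'m::finite) ** (C::complex^'n::finite^'k) = 0"
  by (simp add: vec_eq_iff matrix_matrix_mult_def)
lemma mm_sum_r: "(\<Sum>a\<in>I. (F a::complex^'k::finite^'m::finite)) ** (C::complex^'n::finite^'k) = (\<Sum>a\<in>I. F a ** C)"
  by (induction I rule: infinite_finite_induct) (auto simp: mm_add_r mm_zero_r)

lemma minv_eq: "(M::complex^'n::finite^'n) ** N = mat 1 \<Longrightarrow> N ** M = mat 1 \<Longrightarrow> matrix_inv M = N"
proof -
  assume a: "M ** N = mat 1" "N ** M = mat 1"
  define C where "C = matrix_inv M"
  have "M ** C = mat 1 \<and> C ** M = mat 1"
    unfolding C_def matrix_inv_def by (rule someI[of _ N]) (use a in simp)
  then have "C = C ** (M ** N)" using a by simp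
  also have "\<dots> = N" using \<open>M ** C = mat 1 \<and> C ** M = mat 1\<close> by (simp add: matrix_mul_assoc)
  finally show ?thesis unfolding C_def .
qed

definition Gf :: "(complex \<Rightarrow> 'd::finite op3) \<Rightarrow> complex \<Rightarrow> 'd op3" where
  "Gf F = (\<lambda>t. matrix_inv (F t) ** mderiv F t)"

lemma comm_add_l: "comm (X + Y) Q = comm X Q + comm Y Q"
  unfolding comm_def by (simp add: mm_add_r matrix_add_ldistrib)
lemma comm_zero_l: "comm 0 Q = 0"
  unfolding comm_def by (simp add: vec_eq_iff matrix_matrix_mult_def)
lemma comm_sum_l: "comm (\<Sum>a\<in>I. F a) Q = (\<Sum>a\<in>I. comm (F a) Q)"
  by (induction I rule: infinite_finite_induct) (simp_all add: comm_add_l comm_zero_l)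

lemma mhol_comm: "mhol S F \<Longrightarrow> mhol S G \<Longrightarrow> mhol S (\<lambda>t. comm (F t) (G t))"
  unfolding comm_def by (intro mhol_diff mhol_mult)

lemma mderiv_comm: "open S \<Longrightarrow> mhol S F \<Longrightarrow> mhol S G \<Longrightarrow> t \<in> S \<Longrightarrow>
   mderiv (\<lambda>t. comm (F t) (G t)) t = comm (mderiv F t) (G t) + comm (F t) (mderiv G t)"
  unfolding comm_def
  by (simp add: mderiv_diff mhol_mult mderiv_mult)

definition fw :: "(complex \<Rightarrow> 'd::finite op3) \<Rightarrow> (complex \<Rightarrow> 'd op3) \<Rightarrow> nat list \<Rightarrow> complex \<Rightarrow> 'd op3" where
  "fw q Z0 bs t = foldl (\<lambda>Z l. comm Z ((mderiv ^^ (l - 1)) q t)) (Z0 t) bs"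

lemma fw_Nil: "fw q Z0 [] t = Z0 t" by (simp add: fw_def)
lemma fw_snoc: "fw q Z0 (bs @ [b]) t = comm (fw q Z0 bs t) ((mderiv ^^ (b - 1)) q t)"
  by (simp add: fw_def)
lemma fw_Cons: "fw q Z0 (b # bs) t = fw q (\<lambda>t. comm (Z0 t) ((mderiv ^^ (b - 1)) q t)) bs t"
  by (simp add: fw_def)
lemma fw_pt: "Z1 t = Z2 t \<Longrightarrow> fw q Z1 bs t = fw q Z2 bs t"
  by (simp add: fw_def)
lemma fw_add: "fw q (\<lambda>t. Z1 t + Z2 t) bs t = fw q Z1 bs t + fw q Z2 bs t"
  by (induction bs rule: rev_induct) (simp_all add: fw_Nil fw_snoc comm_add_l)

lemma hfw: "open S \<Longrightarrow> mhol S q \<Longrightarrow> mhol S Z0 \<Longrightarrow> mhol S (fw q Z0 bs)"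
proof (induction bs rule: rev_induct)
  case Nil
  then show ?case using mhol_cong[of S Z0 "fw q Z0 []"] by (simp add: fw_Nil)
next
  case (snoc b bs)
  have "mhol S (\<lambda>t. comm (fw q Z0 bs t) ((mderiv ^^ (b - 1)) q t))"
    using snoc by (intro mhol_comm mhol_funpow) auto
  then show ?case using mhol_cong by (fastforce simp: fw_snoc)
qed

lemma fun_fw_snoc: "fw q Z0 (bs @ [b]) = (\<lambda>t. comm (fw q Z0 bs t) ((mderiv ^^ (b - 1)) q t))"
  by (rule ext) (simp add: fw_snoc)

lemma dfw:
  assumes S: "open S" and q: "mhol S q" and Z: "mhol S Z0"
  shows "(\<forall>l\<in>set bs. 1 \<le> l) \<Longrightarrow> t \<in> S \<Longrightarrow>
    mderiv (fw q Z0 bs) t = fw q (mderiv Z0) bs t + (\<Sum>i<length bs. fw q Z0 (bs[i := bs ! i + 1]) t)"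
proof (induction bs arbitrary: t rule: rev_induct)
  case Nil
  have "fw q Z0 [] = Z0" by (rule ext) (simp add: fw_Nil)
  then show ?case by (simp add: fw_Nil)
next
  case (snoc b bs)
  have b1: "1 \<le> b" and all: "\<forall>l\<in>set bs. 1 \<le> l" using snoc.prems by auto
  have IH: "mderiv (fw q Z0 bs) t = fw q (mderiv Z0) bs t + (\<Sum>i<length bs. fw q Z0 (bs[i := bs ! i + 1]) t)"
    using snoc.IH[OF all snoc.prems(2)] .
  have dq: "mderiv ((mderiv ^^ (b - 1)) q) t = (mderiv ^^ (b + 1 - 1)) q t"
  proof -
    obtain c where "b = Suc c" using b1 by (cases b) auto
    then show ?thesis by simp
  qed
  have "mderiv (fw q Z0 (bs @ [b])) t
      = comm (mderiv (fw q Z0 bs) t) ((mderiv ^^ (b - 1)) q t) + comm (fw q Z0 bs t) ((mderiv ^^ (b + 1 - 1)) q t)"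
    unfolding fun_fw_snoc
    using mderiv_comm[OF S hfw[OF S q Z] mhol_funpow[OF S q] snoc.prems(2)] dq by simp
  also have "\<dots> = fw q (mderiv Z0) (bs @ [b]) t + ((\<Sum>i<length bs. fw q Z0 (bs[i := bs ! i + 1] @ [b]) t) + fw q Z0 (bs @ [b + 1]) t)"
    unfolding IH comm_add_l comm_sum_l by (simp add: fw_snoc)
  also have "(\<Sum>i<length bs. fw q Z0 (bs[i := bs ! i + 1] @ [b]) t) + fw q Z0 (bs @ [b + 1]) t
      = (\<Sum>i<length (bs @ [b]). fw q Z0 ((bs @ [b])[i := (bs @ [b]) ! i + 1]) t)"
    by (simp add: nth_append list_update_append)
  finally show ?case .
qed


lemma funpow_add_on: "open S \<Longrightarrow> mhol S F \<Longrightarrow> mhol S G \<Longrightarrow> t \<in> S \<Longrightarrow>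
  (mderiv ^^ m) (\<lambda>t. F t + G t) t = (mderiv ^^ m) F t + (mderiv ^^ m) G t"
proof (induction m arbitrary: t)
  case 0 then show ?case by simp
next
  case (Suc m)
  have "(mderiv ^^ Suc m) (\<lambda>t. F t + G t) t = mderiv (\<lambda>t. (mderiv ^^ m) F t + (mderiv ^^ m) G t) t"
    using Suc by (simp add: mderiv_cong[of S "(mderiv ^^ m) (\<lambda>t. F t + G t)"])
  also have "\<dots> = (mderiv ^^ Suc m) F t + (mderiv ^^ Suc m) G t"
    using Suc by (simp add: mderiv_add mhol_funpow)
  finally show ?case .
qed

context
  fixes S :: "complex set" and A B Ai Bi :: "complex \<Rightarrow> 'd::finite op3"
  assumes S: "open S" and hA: "mhol S A" and hAi: "mhol S Ai" and hB: "mhol S B" and hBi: "mhol S Bi"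
    and iA1: "\<And>t. t \<in> S \<Longrightarrow> A t ** Ai t = mat 1" and iA2: "\<And>t. t \<in> S \<Longrightarrow> Ai t ** A t = mat 1"
    and iB1: "\<And>t. t \<in> S \<Longrightarrow> B t ** Bi t = mat 1" and iB2: "\<And>t. t \<in> S \<Longrightarrow> Bi t ** B t = mat 1"
begin

lemma rB1: "t \<in> S \<Longrightarrow> M ** B t ** Bi t = M" using iB1 by (simp add: matrix_mul_assoc[symmetric])
lemma rB2: "t \<in> S \<Longrightarrow> M ** Bi t ** B t = M" using iB2 by (simp add: matrix_mul_assoc[symmetric])
lemma rA1: "t \<in> S \<Longrightarrow> M ** A t ** Ai t = M" using iA1 by (simp add: matrix_mul_assoc[symmetric])
lemma rA2: "t \<in> S \<Longrightarrow> M ** Ai t ** A t = M" using iA2 by (simp add: matrix_mul_assoc[symmetric])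

lemma invA: "t \<in> S \<Longrightarrow> matrix_inv (A t) = Ai t" using iA1 iA2 minv_eq by blast
lemma invB: "t \<in> S \<Longrightarrow> matrix_inv (B t) = Bi t" using iB1 iB2 minv_eq by blast
lemma invAB: "t \<in> S \<Longrightarrow> matrix_inv (A t ** B t) = Bi t ** Ai t"
  by (rule minv_eq) (simp_all add: matrix_mul_assoc rA1 rB1 rA2 rB2 iB1 iB2 iA1 iA2)

lemma q_eq: "t \<in> S \<Longrightarrow> Gf B t = Bi t ** mderiv B t" by (simp add: Gf_def invB)
lemma X_eq: "t \<in> S \<Longrightarrow> Gf A t = Ai t ** mderiv A t" by (simp add: Gf_def invA)
lemma hq: "mhol S (Gf B)"
  using mhol_cong[OF mhol_mult[OF hBi mhol_mderiv[OF S hB]]] q_eq by metis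
lemma hX: "mhol S (Gf A)"
  using mhol_cong[OF mhol_mult[OF hAi mhol_mderiv[OF S hA]]] X_eq by metis

lemma GF_eq: "t \<in> S \<Longrightarrow> Gf (\<lambda>t. A t ** B t) t = Gf B t + Bi t ** Gf A t ** B t"
  unfolding Gf_def
  by (simp add: invAB invA invB mderiv_mult[OF S hA hB] matrix_add_ldistrib matrix_mul_assoc rA2)

lemma dBi: "t \<in> S \<Longrightarrow> mderiv Bi t = - (Bi t ** mderiv B t ** Bi t)"
proof -
  assume t: "t \<in> S"
  have "mderiv (\<lambda>t. Bi t ** B t) t = mderiv (\<lambda>t. mat 1) t"
    by (rule mderiv_cong[OF S _ t]) (simp add: iB2)
  then have e: "mderiv Bi t ** B t + Bi t ** mderiv B t = 0"
    by (simp add: mderiv_mult[OF S hBi hB t] mderiv_const)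
  have "mderiv Bi t = (mderiv Bi t ** B t) ** Bi t" by (rule rB1[OF t, symmetric])
  also have "mderiv Bi t ** B t = - (Bi t ** mderiv B t)" using e by (simp add: eq_neg_iff_add_eq_0)
  finally show ?thesis by (simp add: mm_neg_r)
qed

definition Y :: "nat \<Rightarrow> complex \<Rightarrow> 'd op3" where
  "Y j t = Bi t ** (mderiv ^^ j) (Gf A) t ** B t"

lemma hY: "mhol S (Y j)"
  unfolding Y_def[abs_def] by (intro mhol_mult hBi hB mhol_funpow[OF S hX])

lemma dY: "t \<in> S \<Longrightarrow> mderiv (Y j) t = Y (Suc j) t + comm (Y j t) (Gf B t)"
proof -
  assume t: "t \<in> S"
  have hXj: "mhol S ((mderiv ^^ j) (Gf A))" by (rule mhol_funpow[OF S hX])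
  have "mderiv (Y j) t = (mderiv Bi t ** (mderiv ^^ j) (Gf A) t + Bi t ** mderiv ((mderiv ^^ j) (Gf A)) t) ** B t
      + Bi t ** (mderiv ^^ j) (Gf A) t ** mderiv B t"
    unfolding Y_def[abs_def]
    by (simp add: mderiv_mult[OF S mhol_mult[OF hBi hXj] hB t] mderiv_mult[OF S hBi hXj t])
  also have "\<dots> = Y (Suc j) t + comm (Y j t) (Gf B t)"
    unfolding Y_def comm_def dBi[OF t] q_eq[OF t]
    by (simp add: mm_add_r mm_neg_r mm_diff_r mm_diff_l matrix_add_ldistrib matrix_mul_assoc rB1[OF t])
  finally show ?thesis .
qed

definition W :: "nat list \<Rightarrow> complex \<Rightarrow> 'd op3" where
  "W ls = fw (Gf B) (Y (last ls - 1)) (butlast ls)"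

lemma hW: "mhol S (W ls)"
  unfolding W_def by (rule hfw[OF S hq hY])

lemma W_snoc: "W (bs @ [a]) = fw (Gf B) (Y (a - 1)) bs"
  unfolding W_def by simp

lemma dW: "ls \<noteq> [] \<Longrightarrow> \<forall>l\<in>set ls. 1 \<le> l \<Longrightarrow> t \<in> S \<Longrightarrow>
  mderiv (W ls) t = (\<Sum>i<length ls. W (ls[i := ls ! i + 1]) t) + W (1 # ls) t"
proof -
  assume ne: "ls \<noteq> []" and all: "\<forall>l\<in>set ls. 1 \<le> l" and t: "t \<in> S"
  obtain bs a where ls: "ls = bs @ [a]" using ne by (metis append_butlast_last_id)
  have a1: "1 \<le> a" and allb: "\<forall>l\<in>set bs. 1 \<le> l" using all ls by auto
  have Ya: "Y (Suc (a - 1)) = Y a" using a1 by simp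
  have "mderiv (W ls) t = fw (Gf B) (mderiv (Y (a - 1))) bs t + (\<Sum>i<length bs. fw (Gf B) (Y (a - 1)) (bs[i := bs ! i + 1]) t)"
    unfolding ls W_snoc by (rule dfw[OF S hq hY allb t])
  also have "fw (Gf B) (mderiv (Y (a - 1))) bs t = fw (Gf B) (\<lambda>t. Y a t + comm (Y (a - 1) t) (Gf B t)) bs t"
    unfolding fw_def using dY[OF t, of "a - 1"] Ya by simp
  also have "\<dots> = W (bs @ [a + 1]) t + W ((1 # bs) @ [a]) t"
    unfolding fw_add W_snoc by (simp add: fw_Cons)
  also have "(\<Sum>i<length bs. fw (Gf B) (Y (a - 1)) (bs[i := bs ! i + 1]) t) = (\<Sum>i<length bs. W (bs[i := bs ! i + 1] @ [a]) t)"
    unfolding W_snoc ..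
  finally show ?thesis unfolding ls
    by (simp add: nth_append list_update_append algebra_simps)
qed

definition T :: "nat \<Rightarrow> complex \<Rightarrow> 'd op3" where
  "T N t = (\<Sum>ls\<in>CC N. real (ccoef ls) *\<^sub>R W ls t)"

lemma hT: "mhol S (T N)"
  unfolding T_def[abs_def] by (intro mhol_sum mhol_scaleR hW)

lemma CC1: "CC 1 = {[1]}"
proof -
  have "ls \<in> CC 1 \<longleftrightarrow> ls = [1]" for ls
  proof
    assume "ls \<in> CC 1"
    then have all: "\<forall>l\<in>set ls. 1 \<le> l" and s: "sum_list ls = 1" unfolding CC_def by auto
    then obtain l rest where ls: "ls = l # rest" by (cases ls) auto
    then have "1 \<le> l" "\<forall>l\<in>set rest. 1 \<le> l" using all by auto
    moreover have "l + sum_list rest = 1" using s ls by simp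
    ultimately have "l = 1" "sum_list rest = 0" by arith+
    moreover have "rest = []"
    proof -
      have "length rest \<le> sum_list rest" using length_le_sum_list \<open>\<forall>l\<in>set rest. 1 \<le> l\<close> by blast
      then have "length rest = 0" using \<open>sum_list rest = 0\<close> by linarith
      then show ?thesis by simp
    qed
    ultimately show "ls = [1]" using ls by simp
  qed (simp add: CC_def)
  then show ?thesis by auto
qed

lemma main_ind: "t \<in> S \<Longrightarrow> (mderiv ^^ m) (Y 0) t = T (Suc m) t"
proof (induction m arbitrary: t)
  case 0
  have "ccoef [1] = 1" by (simp add: ccoef_def)
  then show ?case by (simp add: T_def CC1 CC1[unfolded One_nat_def] W_def fw_Nil)
next
  case (Suc m)
  have "(mderiv ^^ Suc m) (Y 0) t = mderiv (T (Suc m)) t"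
    using Suc by (simp add: mderiv_cong[OF S, of "(mderiv ^^ m) (Y 0)" "T (Suc m)"])
  also have "\<dots> = (\<Sum>ls\<in>CC (Suc m). real (ccoef ls) *\<^sub>R mderiv (W ls) t)"
    unfolding T_def[abs_def]
    by (simp add: mderiv_sum[OF S _ Suc.prems] mhol_scaleR hW mderiv_scaleR[OF S hW Suc.prems])
  also have "\<dots> = (\<Sum>ls\<in>CC (Suc m). real (ccoef ls) *\<^sub>R ((\<Sum>i<length ls. W (ls[i := ls ! i + 1]) t) + W (1 # ls) t))"
  proof (rule sum.cong[OF refl])
    fix ls assume "ls \<in> CC (Suc m)"
    then have "ls \<noteq> []" "\<forall>l\<in>set ls. 1 \<le> l" unfolding CC_def by auto
    then show "real (ccoef ls) *\<^sub>R mderiv (W ls) t = real (ccoef ls) *\<^sub>R ((\<Sum>i<length ls. W (ls[i := ls ! i + 1]) t) + W (1 # ls) t)"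
      using dW Suc.prems by simp
  qed
  also have "\<dots> = T (Suc (Suc m)) t"
    unfolding T_def using sum_identity[of "\<lambda>ls. W ls t" "Suc m"] by simp
  finally show ?case .
qed

lemma CC_Union: "1 \<le> N \<Longrightarrow> CC N = (\<Union>n\<in>{1..N}. compositions N n)"
proof -
  assume N: "1 \<le> N"
  have "ls \<in> CC N \<longleftrightarrow> ls \<in> (\<Union>n\<in>{1..N}. compositions N n)" for ls
  proof
    assume a: "ls \<in> CC N"
    then have "length ls \<le> N" using length_le_sum_list unfolding CC_def by fastforce
    moreover have "ls \<noteq> []" using a N unfolding CC_def by auto
    ultimately show "ls \<in> (\<Union>n\<in>{1..N}. compositions N n)" using a unfolding CC_def compositions_def
      by (auto simp: Suc_le_eq)
  qed (auto simp: CC_def compositions_def)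
  then show ?thesis by blast
qed

lemma finite_compositions: "finite (compositions N n)"
  by (rule finite_subset[OF _ finite_CC[of N]]) (auto simp: CC_def compositions_def)


lemma abstract_main:
  assumes S0: "0 \<in> S" and k: "2 \<le> k"
  shows "(mderiv ^^ (k - 2)) (Gf (\<lambda>t. A t ** B t)) 0 =
      (mderiv ^^ (k - 2)) (Gf B) 0 + matrix_inv (B 0) ** (mderiv ^^ (k - 2)) (Gf A) 0 ** B 0
      + (\<Sum>n = 2..k - 1. \<Sum>ls \<in> compositions (k - 1) n.
           real (ccoef ls) *\<^sub>R foldl (\<lambda>X l. comm X ((mderiv ^^ (l + 1 - 2)) (Gf B) 0))
               (matrix_inv (B 0) ** (mderiv ^^ (ls ! (n - 1) + 1 - 2)) (Gf A) 0 ** B 0) (take (n - 1) ls))"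
proof -
  define m where "m = k - 2"
  have km: "k - 1 = Suc m" "k - 2 = m" using k unfolding m_def by arith+
  have "(mderiv ^^ m) (Gf (\<lambda>t. A t ** B t)) 0 = (mderiv ^^ m) (\<lambda>t. Gf B t + Y 0 t) 0"
    by (rule funpow_cong[OF S _ S0]) (simp add: GF_eq Y_def)
  also have "\<dots> = (mderiv ^^ m) (Gf B) 0 + T (Suc m) 0"
    using funpow_add_on[OF S hq hY S0] main_ind[OF S0] by simp
  finally have L: "(mderiv ^^ m) (Gf (\<lambda>t. A t ** B t)) 0 = (mderiv ^^ m) (Gf B) 0 + T (Suc m) 0" .
  have T1: "T (Suc m) 0 = (\<Sum>n\<in>{1..Suc m}. \<Sum>ls\<in>compositions (Suc m) n. real (ccoef ls) *\<^sub>R W ls 0)"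
    unfolding T_def CC_Union[OF le_add2[of 1 m, unfolded add.commute[of m 1] plus_1_eq_Suc]]
    by (rule sum.UNION_disjoint) (simp_all add: finite_compositions, auto simp: compositions_def)
  have c1: "compositions (Suc m) 1 = {[Suc m]}"
    unfolding compositions_def by (auto simp: length_Suc_conv)
  have "ccoef [Suc m] = 1" by (simp add: ccoef_def)
  then have T1a: "(\<Sum>ls\<in>compositions (Suc m) 1. real (ccoef ls) *\<^sub>R W ls 0) = matrix_inv (B 0) ** (mderiv ^^ m) (Gf A) 0 ** B 0"
    unfolding c1 by (simp add: W_def fw_Nil Y_def invB[OF S0])
  have T2: "(\<Sum>ls\<in>compositions (Suc m) n. real (ccoef ls) *\<^sub>R W ls 0) =
     (\<Sum>ls \<in> compositions (Suc m) n. real (ccoef ls) *\<^sub>R foldl (\<lambda>X l. comm X ((mderiv ^^ (l + 1 - 2)) (Gf B) 0))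
               (matrix_inv (B 0) ** (mderiv ^^ (ls ! (n - 1) + 1 - 2)) (Gf A) 0 ** B 0) (take (n - 1) ls))"
    if n: "n \<in> {2..Suc m}" for n
  proof (rule sum.cong[OF refl])
    fix ls assume "ls \<in> compositions (Suc m) n"
    then have len: "length ls = n" unfolding compositions_def by auto
    then have ne: "ls \<noteq> []" using n by auto
    have "last ls = ls ! (n - 1)" "butlast ls = take (n - 1) ls"
      using ne len by (simp_all add: last_conv_nth butlast_conv_take)
    moreover have "(\<lambda>X l. comm X ((mderiv ^^ (l + 1 - 2)) (Gf B) 0)) = (\<lambda>X l. comm X ((mderiv ^^ (l - 1)) (Gf B) 0))"
      by (simp add: numeral_2_eq_2)
    moreover have "ls ! (n - 1) + 1 - 2 = ls ! (n - 1) - 1" by simp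
    ultimately show "real (ccoef ls) *\<^sub>R W ls 0 = real (ccoef ls) *\<^sub>R foldl (\<lambda>X l. comm X ((mderiv ^^ (l + 1 - 2)) (Gf B) 0))
               (matrix_inv (B 0) ** (mderiv ^^ (ls ! (n - 1) + 1 - 2)) (Gf A) 0 ** B 0) (take (n - 1) ls)"
      by (simp add: W_def fw_def Y_def invB[OF S0])
  qed
  have "T (Suc m) 0 = matrix_inv (B 0) ** (mderiv ^^ m) (Gf A) 0 ** B 0 +
     (\<Sum>n = 2..Suc m. \<Sum>ls \<in> compositions (Suc m) n. real (ccoef ls) *\<^sub>R foldl (\<lambda>X l. comm X ((mderiv ^^ (l + 1 - 2)) (Gf B) 0))
               (matrix_inv (B 0) ** (mderiv ^^ (ls ! (n - 1) + 1 - 2)) (Gf A) 0 ** B 0) (take (n - 1) ls))"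
  proof -
    have ins: "{1..Suc m} = insert 1 {2..Suc m}" by auto
    have "T (Suc m) 0 = (\<Sum>ls\<in>compositions (Suc m) 1. real (ccoef ls) *\<^sub>R W ls 0) + 
        (\<Sum>n\<in>{2..Suc m}. \<Sum>ls\<in>compositions (Suc m) n. real (ccoef ls) *\<^sub>R W ls 0)"
      unfolding T1 ins by (rule sum.insert) auto
    also have "(\<Sum>n\<in>{2..Suc m}. \<Sum>ls\<in>compositions (Suc m) n. real (ccoef ls) *\<^sub>R W ls 0) = 
       (\<Sum>n = 2..Suc m. \<Sum>ls \<in> compositions (Suc m) n. real (ccoef ls) *\<^sub>R foldl (\<lambda>X l. comm X ((mderiv ^^ (l + 1 - 2)) (Gf B) 0))
               (matrix_inv (B 0) ** (mderiv ^^ (ls ! (n - 1) + 1 - 2)) (Gf A) 0 ** B 0) (take (n - 1) ls))"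
      by (rule sum.cong[OF refl], rule T2)
    finally show ?thesis unfolding T1a .
  qed
  then show ?thesis unfolding km L by (simp add: add.assoc)
qed

end


lemma holR1:
  fixes R :: "complex \<Rightarrow> complex \<Rightarrow> 'd::finite op2" and c :: "nat \<Rightarrow> nat \<Rightarrow> 'd op2"
  assumes analytic: "\<And>a b i j. norm a < r \<Longrightarrow> norm b < r \<Longrightarrow>
        ((\<lambda>(m, n). c m n $ i $ j * a ^ m * b ^ n) has_sum (R a b $ i $ j)) UNIV"
    and b: "norm b < r"
  shows "(\<lambda>a. R a b $ p $ q) holomorphic_on ball 0 r"
proof (rule powser_hol[where h="\<lambda>m n. c m n $ p $ q * b ^ n"])
  fix a :: complex assume "norm a < r"
  then have "((\<lambda>(m, n). c m n $ p $ q * a ^ m * b ^ n) has_sum (R a b $ p $ q)) UNIV"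
    using analytic b by blast
  then show "((\<lambda>(m, n). c m n $ p $ q * b ^ n * a ^ m) has_sum R a b $ p $ q) UNIV"
    by (rule has_sum_cong[THEN iffD1, rotated]) (auto simp: mult_ac)
qed

lemma holR2:
  fixes R :: "complex \<Rightarrow> complex \<Rightarrow> 'd::finite op2" and c :: "nat \<Rightarrow> nat \<Rightarrow> 'd op2"
  assumes analytic: "\<And>a b i j. norm a < r \<Longrightarrow> norm b < r \<Longrightarrow>
        ((\<lambda>(m, n). c m n $ i $ j * a ^ m * b ^ n) has_sum (R a b $ i $ j)) UNIV"
    and a: "norm a < r"
  shows "(\<lambda>b. R a b $ p $ q) holomorphic_on ball 0 r"
proof (rule powser_hol[where h="\<lambda>n m. c m n $ p $ q * a ^ m"])
  fix b :: complex assume "norm b < r"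
  then have h: "((\<lambda>(m, n). c m n $ p $ q * a ^ m * b ^ n) has_sum (R a b $ p $ q)) UNIV"
    using analytic a by blast
  have bij: "bij_betw prod.swap (UNIV :: (nat \<times> nat) set) UNIV" by (simp add: bij_betwI')
  have "((\<lambda>x. (\<lambda>(m, n). c m n $ p $ q * a ^ m * b ^ n) (prod.swap x)) has_sum (R a b $ p $ q)) UNIV"
    using has_sum_reindex_bij_betw[OF bij] h by blast
  then show "((\<lambda>(n, m). c m n $ p $ q * a ^ m * b ^ n) has_sum R a b $ p $ q) UNIV"
    by (simp add: case_prod_beta')
qed

lemma hol_shift: "g holomorphic_on ball 0 r \<Longrightarrow> (\<And>s. s \<in> S \<Longrightarrow> norm (x + s) < r) \<Longrightarrow> (\<lambda>s. g (x + s)) holomorphic_on S"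
proof -
  assume g: "g holomorphic_on ball 0 r" and n: "\<And>s. s \<in> S \<Longrightarrow> norm (x + s) < r"
  have "(\<lambda>s. x + s) holomorphic_on S" by (intro holomorphic_intros)
  moreover have "(\<lambda>s. x + s) ` S \<subseteq> ball 0 r" using n by auto
  ultimately have "(g \<circ> (\<lambda>s. x + s)) holomorphic_on S" using holomorphic_on_compose_gen g by blast
  then show ?thesis by (simp add: o_def)
qed

lemma mhol_Rslot:
  fixes R :: "complex \<Rightarrow> complex \<Rightarrow> 'd::finite op2" and Wf :: "complex \<Rightarrow> nat \<Rightarrow> complex" and S :: "complex set"
  assumes "\<And>p q. (\<lambda>s. R (Wf s i) (Wf s j) $ p $ q) holomorphic_on S"
  shows "mhol S (\<lambda>s. Rslot R i j (Wf s))"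
  unfolding mhol_def Rslot_def using assms by (auto intro!: holomorphic_intros)

lemma foldl_neg: "foldl (\<lambda>X l. comm (- f l) X) (- Z) bs = - foldl (\<lambda>X l. comm X (f l)) Z bs"
proof (induction bs arbitrary: Z)
  case Nil then show ?case by simp
next
  case (Cons b bs)
  have "comm (- f b) (- Z) = - comm Z (f b)" unfolding comm_def by (simp add: mm_neg_l mm_neg_r)
  then show ?case using Cons[of "comm Z (f b)"] by simp
qed


lemma slot_hol1:
  fixes R :: "complex \<Rightarrow> complex \<Rightarrow> 'd::finite op2"
  assumes HR1: "\<And>b p q. norm b < r \<Longrightarrow> (\<lambda>a. R a b $ p $ q) holomorphic_on ball 0 r"
    and HR2: "\<And>a p q. norm a < r \<Longrightarrow> (\<lambda>b. R a b $ p $ q) holomorphic_on ball 0 r"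
    and W: "\<And>s. Wf s i = x + s" "\<And>s. Wf s j = y"
    and y: "norm y < r" and sh: "\<And>s. s \<in> S \<Longrightarrow> norm (x + s) < r"
  shows "mhol S (\<lambda>s. Rslot R i j (Wf s))" "mhol S (\<lambda>s. Rslot (\<lambda>a b. swap21 (R b a)) i j (Wf s))"
proof -
  show "mhol S (\<lambda>s. Rslot R i j (Wf s))"
    by (rule mhol_Rslot) (simp add: W hol_shift[OF HR1[OF y] sh])
  show "mhol S (\<lambda>s. Rslot (\<lambda>a b. swap21 (R b a)) i j (Wf s))"
    by (rule mhol_Rslot) (simp add: W swap21_def hol_shift[OF HR2[OF y] sh])
qed

lemma slot_hol2:
  fixes R :: "complex \<Rightarrow> complex \<Rightarrow> 'd::finite op2"
  assumes HR1: "\<And>b p q. norm b < r \<Longrightarrow> (\<lambda>a. R a b $ p $ q) holomorphic_on ball 0 r"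
    and HR2: "\<And>a p q. norm a < r \<Longrightarrow> (\<lambda>b. R a b $ p $ q) holomorphic_on ball 0 r"
    and W: "\<And>s. Wf s i = x" "\<And>s. Wf s j = y + s"
    and x: "norm x < r" and sh: "\<And>s. s \<in> S \<Longrightarrow> norm (y + s) < r"
  shows "mhol S (\<lambda>s. Rslot R i j (Wf s))" "mhol S (\<lambda>s. Rslot (\<lambda>a b. swap21 (R b a)) i j (Wf s))"
proof -
  show "mhol S (\<lambda>s. Rslot R i j (Wf s))"
    by (rule mhol_Rslot) (simp add: W hol_shift[OF HR2[OF x] sh])
  show "mhol S (\<lambda>s. Rslot (\<lambda>a b. swap21 (R b a)) i j (Wf s))"
    by (rule mhol_Rslot) (simp add: W swap21_def hol_shift[OF HR1[OF x] sh])
qed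

theorem mainTheorem1:
  fixes R :: "complex \<Rightarrow> complex \<Rightarrow> 'd::finite op2"
    and c :: "nat \<Rightarrow> nat \<Rightarrow> 'd op2"
    and r :: real and k :: nat and u :: "nat \<Rightarrow> complex"
  assumes r_pos: "r > 0"
    and analytic: "\<And>a b i j. norm a < r \<Longrightarrow> norm b < r \<Longrightarrow>
        ((\<lambda>(m, n). c m n $ i $ j * a ^ m * b ^ n) has_sum (R a b $ i $ j)) UNIV"
    and YBE: "\<And>w. norm (w 1) < r \<Longrightarrow> norm (w 2) < r \<Longrightarrow> norm (w 3) < r \<Longrightarrow>
        Rslot R 1 2 w ** Rslot R 1 3 w ** Rslot R 2 3 w =
        Rslot R 2 3 w ** Rslot R 1 3 w ** Rslot R 1 2 w"
    and regular: "\<And>a. norm a < r \<Longrightarrow> R a a = flipP"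
    and unitary: "\<And>a b. norm a < r \<Longrightarrow> norm b < r \<Longrightarrow> R a b ** swap21 (R b a) = mat 1"
    and k2: "k \<ge> 2"
    and u_in: "norm (u 1) < r" "norm (u 2) < r" "norm (u 3) < r"
  shows
   "Qk R k [1] [2,3] u =
      Qk R k [1] [2] u
      + matrix_inv (RIJ R [1] [2] u) ** Qk R k [1] [3] u ** RIJ R [1] [2] u
      + (\<Sum>n = 2..k - 1. \<Sum>ls \<in> compositions (k - 1) n.
           real (ccoef ls) *\<^sub>R
             foldl (\<lambda>X l. comm X (Qk R (l + 1) [1] [2] u))
               (matrix_inv (RIJ R [1] [2] u) ** Qk R (ls ! (n - 1) + 1) [1] [3] u ** RIJ R [1] [2] u)
               (take (n - 1) ls))
    \<and>
    Qtk R k [1,2] [3] u =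
      Qtk R k [2] [3] u
      + matrix_inv (RIJ R [2] [3] u) ** Qtk R k [1] [3] u ** RIJ R [2] [3] u
      + (\<Sum>n = 2..k - 1. \<Sum>ls \<in> compositions (k - 1) n.
           real (ccoef ls) *\<^sub>R
             foldl (\<lambda>X l. comm (Qtk R (l + 1) [2] [3] u) X)
               (matrix_inv (RIJ R [2] [3] u) ** Qtk R (ls ! (n - 1) + 1) [1] [3] u ** RIJ R [2] [3] u)
               (take (n - 1) ls))"


proof -
  have HR1: "\<And>b p q. norm b < r \<Longrightarrow> (\<lambda>a. R a b $ p $ q) holomorphic_on ball 0 r"
    using holR1[OF analytic] by blast
  have HR2: "\<And>a p q. norm a < r \<Longrightarrow> (\<lambda>b. R a b $ p $ q) holomorphic_on ball 0 r"
    using holR2[OF analytic] by blast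
  define R' where "R' = (\<lambda>a b. swap21 (R b a))"
  have unit': "\<And>a b. norm a < r \<Longrightarrow> norm b < r \<Longrightarrow> R a b ** R' a b = mat 1"
    unfolding R'_def using unitary by blast
  define d where "d = min (r - norm (u 1)) (min (r - norm (u 2)) (r - norm (u 3)))"
  define S where "S = ball (0::complex) d"
  have dpos: "d > 0" using u_in unfolding d_def by simp
  have S: "open S" "0 \<in> S" unfolding S_def using dpos by auto
  have inS: "norm (u m + s) < r" if "s \<in> S" "m \<in> {1,2,3}" for s m
  proof -
    have "norm s < d" using that unfolding S_def by simp
    moreover have "d \<le> r - norm (u m)" using that(2) unfolding d_def by auto
    ultimately show ?thesis using norm_triangle_lt[of "u m" s r] by simp
  qed
  have inS1: "\<And>s. s \<in> S \<Longrightarrow> norm (u 1 + s) < r" and inS2: "\<And>s. s \<in> S \<Longrightarrow> norm (u 2 + s) < r"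
    and inS3: "\<And>s. s \<in> S \<Longrightarrow> norm (u 3 + s) < r" using inS by auto
  have rinv: "M ** N = mat 1 \<Longrightarrow> N ** M = mat 1" for M N :: "'d op3"
    using matrix_left_right_inverse by blast
  define w where "w = shiftI [1] u"
  have w: "\<And>s. w s 1 = u 1 + s" "\<And>s. w s 2 = u 2" "\<And>s. w s 3 = u 3"
    unfolding w_def shiftI_def by auto
  define A where "A = (\<lambda>s. RIJ R [1] [3] (shiftI [1] u s))"
  define B where "B = (\<lambda>s. RIJ R [1] [2] (shiftI [1] u s))"
  define Ai where "Ai = (\<lambda>s. Rslot R' 1 3 (w s))"
  define Bi where "Bi = (\<lambda>s. Rslot R' 1 2 (w s))"
  have A_eq: "A = (\<lambda>s. Rslot R 1 3 (w s))" unfolding A_def w_def by (simp add: RIJ_def)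
  have B_eq: "B = (\<lambda>s. Rslot R 1 2 (w s))" unfolding B_def w_def by (simp add: RIJ_def)
  have hA: "mhol S A" "mhol S Ai" unfolding A_eq Ai_def R'_def
    using slot_hol1[OF HR1 HR2 w(1) w(3) u_in(3) inS1] by auto
  have hB: "mhol S B" "mhol S Bi" unfolding B_eq Bi_def R'_def
    using slot_hol1[OF HR1 HR2 w(1) w(2) u_in(2) inS1] by auto
  have iA1: "\<And>t. t \<in> S \<Longrightarrow> A t ** Ai t = mat 1" unfolding A_eq Ai_def
  proof (rule inv13)
    fix t assume t: "t \<in> S"
    show "R (w t 1) (w t 3) ** R' (w t 1) (w t 3) = mat 1" unfolding w by (rule unit'[OF inS1[OF t] u_in(3)])
  qed
  have iB1: "\<And>t. t \<in> S \<Longrightarrow> B t ** Bi t = mat 1" unfolding B_eq Bi_def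
  proof (rule inv12)
    fix t assume t: "t \<in> S"
    show "R (w t 1) (w t 2) ** R' (w t 1) (w t 2) = mat 1" unfolding w by (rule unit'[OF inS1[OF t] u_in(2)])
  qed
  have E1: "(mderiv ^^ (k - 2)) (Gf (\<lambda>t. A t ** B t)) 0 =
      (mderiv ^^ (k - 2)) (Gf B) 0 + matrix_inv (B 0) ** (mderiv ^^ (k - 2)) (Gf A) 0 ** B 0
      + (\<Sum>n = 2..k - 1. \<Sum>ls \<in> compositions (k - 1) n.
           real (ccoef ls) *\<^sub>R foldl (\<lambda>X l. comm X ((mderiv ^^ (l + 1 - 2)) (Gf B) 0))
               (matrix_inv (B 0) ** (mderiv ^^ (ls ! (n - 1) + 1 - 2)) (Gf A) 0 ** B 0) (take (n - 1) ls))"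
    by (rule abstract_main[OF S(1) hA(1) hA(2) hB(1) hB(2) iA1 rinv[OF iA1] iB1 rinv[OF iB1] S(2) k2])
  have F1: "(\<lambda>s. RIJ R [1] [2, 3] (shiftI [1] u s)) = (\<lambda>t. A t ** B t)"
    unfolding A_def B_def by (simp add: RIJ_def)
  have Q1: "Qk R k [1] [2, 3] u = (mderiv ^^ (k - 2)) (Gf (\<lambda>t. A t ** B t)) 0"
    unfolding Qk_def Let_def F1 Gf_def ..
  have Q12: "\<And>j. Qk R j [1] [2] u = (mderiv ^^ (j - 2)) (Gf B) 0"
    unfolding Qk_def Let_def B_def Gf_def ..
  have Q13: "\<And>j. Qk R j [1] [3] u = (mderiv ^^ (j - 2)) (Gf A) 0"
    unfolding Qk_def Let_def A_def Gf_def ..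
  have sh0: "shiftI [1] u 0 = u" "shiftI [3] u 0 = u" by (auto simp: shiftI_def)
  have RB: "RIJ R [1] [2] u = B 0" unfolding B_def sh0 ..
  have part1: "Qk R k [1] [2,3] u =
      Qk R k [1] [2] u
      + matrix_inv (RIJ R [1] [2] u) ** Qk R k [1] [3] u ** RIJ R [1] [2] u
      + (\<Sum>n = 2..k - 1. \<Sum>ls \<in> compositions (k - 1) n.
           real (ccoef ls) *\<^sub>R
             foldl (\<lambda>X l. comm X (Qk R (l + 1) [1] [2] u))
               (matrix_inv (RIJ R [1] [2] u) ** Qk R (ls ! (n - 1) + 1) [1] [3] u ** RIJ R [1] [2] u)
               (take (n - 1) ls))"
    unfolding Q1 Q12 Q13 RB by (rule E1)
  define v where "v = shiftI [3] u"
  have v: "\<And>s. v s 1 = u 1" "\<And>s. v s 2 = u 2" "\<And>s. v s 3 = u 3 + s"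
    unfolding v_def shiftI_def by auto
  define A2 where "A2 = (\<lambda>s. RIJ R [1] [3] (shiftI [3] u s))"
  define B2 where "B2 = (\<lambda>s. RIJ R [2] [3] (shiftI [3] u s))"
  define Ai2 where "Ai2 = (\<lambda>s. Rslot R' 1 3 (v s))"
  define Bi2 where "Bi2 = (\<lambda>s. Rslot R' 2 3 (v s))"
  have A2_eq: "A2 = (\<lambda>s. Rslot R 1 3 (v s))" unfolding A2_def v_def by (simp add: RIJ_def)
  have B2_eq: "B2 = (\<lambda>s. Rslot R 2 3 (v s))" unfolding B2_def v_def by (simp add: RIJ_def)
  have hA2: "mhol S A2" "mhol S Ai2" unfolding A2_eq Ai2_def R'_def
    using slot_hol2[OF HR1 HR2 v(1) v(3) u_in(1) inS3] by auto
  have hB2: "mhol S B2" "mhol S Bi2" unfolding B2_eq Bi2_def R'_def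
    using slot_hol2[OF HR1 HR2 v(2) v(3) u_in(2) inS3] by auto
  have iA21: "\<And>t. t \<in> S \<Longrightarrow> A2 t ** Ai2 t = mat 1" unfolding A2_eq Ai2_def
  proof (rule inv13)
    fix t assume t: "t \<in> S"
    show "R (v t 1) (v t 3) ** R' (v t 1) (v t 3) = mat 1" unfolding v by (rule unit'[OF u_in(1) inS3[OF t]])
  qed
  have iB21: "\<And>t. t \<in> S \<Longrightarrow> B2 t ** Bi2 t = mat 1" unfolding B2_eq Bi2_def
  proof (rule inv23)
    fix t assume t: "t \<in> S"
    show "R (v t 2) (v t 3) ** R' (v t 2) (v t 3) = mat 1" unfolding v by (rule unit'[OF u_in(2) inS3[OF t]])
  qed
  have E2: "(mderiv ^^ (k - 2)) (Gf (\<lambda>t. A2 t ** B2 t)) 0 =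
      (mderiv ^^ (k - 2)) (Gf B2) 0 + matrix_inv (B2 0) ** (mderiv ^^ (k - 2)) (Gf A2) 0 ** B2 0
      + (\<Sum>n = 2..k - 1. \<Sum>ls \<in> compositions (k - 1) n.
           real (ccoef ls) *\<^sub>R foldl (\<lambda>X l. comm X ((mderiv ^^ (l + 1 - 2)) (Gf B2) 0))
               (matrix_inv (B2 0) ** (mderiv ^^ (ls ! (n - 1) + 1 - 2)) (Gf A2) 0 ** B2 0) (take (n - 1) ls))"
    by (rule abstract_main[OF S(1) hA2(1) hA2(2) hB2(1) hB2(2) iA21 rinv[OF iA21] iB21 rinv[OF iB21] S(2) k2])
  have F2: "(\<lambda>s. RIJ R [1, 2] [3] (shiftI [3] u s)) = (\<lambda>t. A2 t ** B2 t)"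
    unfolding A2_def B2_def by (simp add: RIJ_def)
  have Qt1: "Qtk R k [1, 2] [3] u = - (mderiv ^^ (k - 2)) (Gf (\<lambda>t. A2 t ** B2 t)) 0"
    unfolding Qtk_def Let_def F2 Gf_def ..
  have Qt23: "\<And>j. Qtk R j [2] [3] u = - (mderiv ^^ (j - 2)) (Gf B2) 0"
    unfolding Qtk_def Let_def B2_def Gf_def ..
  have Qt13: "\<And>j. Qtk R j [1] [3] u = - (mderiv ^^ (j - 2)) (Gf A2) 0"
    unfolding Qtk_def Let_def A2_def Gf_def ..
  have RB2: "RIJ R [2] [3] u = B2 0" unfolding B2_def sh0 ..
  have negmid: "\<And>M N P :: 'd op3. M ** (- N) ** P = - (M ** N ** P)" by (simp add: mm_neg_l mm_neg_r)
  have part2: "Qtk R k [1,2] [3] u =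
      Qtk R k [2] [3] u
      + matrix_inv (RIJ R [2] [3] u) ** Qtk R k [1] [3] u ** RIJ R [2] [3] u
      + (\<Sum>n = 2..k - 1. \<Sum>ls \<in> compositions (k - 1) n.
           real (ccoef ls) *\<^sub>R
             foldl (\<lambda>X l. comm (Qtk R (l + 1) [2] [3] u) X)
               (matrix_inv (RIJ R [2] [3] u) ** Qtk R (ls ! (n - 1) + 1) [1] [3] u ** RIJ R [2] [3] u)
               (take (n - 1) ls))"
    unfolding Qt1 Qt23 Qt13 RB2 negmid foldl_neg E2
    by (simp add: sum_negf)
  show ?thesis using part1 part2 by blast
qed


end
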